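(* Let $q\geq 2$ be an integer and let $\lambda\in\{0,\ldots,q-1\}$. Then for every $a\in\mathbb{N}$, $$u_q(aq+\lambda)=q\,u_q(a)+(\lambda+1-q)w_q(a)+\frac{q}{2}a^2+\left(\lambda+1-\frac{q}{2}\right)a = q\,u_q(a)+(\lambda+1-q)w_q(a)+q\frac{a(a+1)}{2}+(\lambda+1-q)a.$$
   Context: For an integer $q\geq 2$ and $n\in\mathbb{N}=\{0,1,2,\ldots\}$: $v_q(0)=0$ and, for $n>0$, $v_q(n)=\max\{k\in\mathbb{N}: q^k \text{ divides } n\}$; $w_q(n)=\sum_{i=0}^n v_q(i)$; $u_q(n)=\sum_{i=0}^n w_q(i)$. *)

theory Defs
  imports Complex_Main
begin

definition v :: "nat \<Rightarrow> nat \<Rightarrow> nat" where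
  "v q n = (if n = 0 then 0 else (GREATEST k. q ^ k dvd n))"

definition w :: "nat \<Rightarrow> nat \<Rightarrow> nat" where
  "w q n = (\<Sum>i=0..n. v q i)"

definition u :: "nat \<Rightarrow> nat \<Rightarrow> nat" where
  "u q n = (\<Sum>i=0..n. w q i)"

end

theory Submission
  imports Defs
begin

lemma v_char:
  assumes "n > 0" "q ^ k dvd n" "\<not> q ^ Suc k dvd n"
  shows "v q n = k"
proof -
  have "(GREATEST k. q ^ k dvd n) = k"
  proof (rule Greatest_equality)
    show "q ^ k dvd n" by fact
    fix y assume "q ^ y dvd n"
    show "y \<le> k"
    proof (rule ccontr)
      assume "\<not> y \<le> k"
      then have "q ^ Suc k dvd q ^ y" by (intro le_imp_power_dvd) simp
      with \<open>q ^ y dvd n\<close> assms(3) show False using dvd_trans by blast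
    qed
  qed
  with assms show ?thesis by (simp add: v_def)
qed

lemma v_prop:
  assumes "n > 0" "q \<ge> 2"
  shows "q ^ v q n dvd n \<and> \<not> q ^ Suc (v q n) dvd n"
proof -
  have bnd: "y \<le> n" if "q ^ y dvd n" for y
  proof -
    have "y < 2 ^ y" by simp
    also have "\<dots> \<le> q ^ y" using assms(2) by (simp add: power_mono)
    also have "\<dots> \<le> n" using that assms(1) by (simp add: dvd_imp_le)
    finally show ?thesis by simp
  qed
  have P: "q ^ (GREATEST k. q ^ k dvd n) dvd n"
    by (rule GreatestI_nat[where k=0 and b=n]) (auto intro: bnd)
  have Q: "\<not> q ^ Suc (GREATEST k. q ^ k dvd n) dvd n"
  proof
    assume "q ^ Suc (GREATEST k. q ^ k dvd n) dvd n"
    then have "Suc (GREATEST k. q ^ k dvd n) \<le> (GREATEST k. q ^ k dvd n)"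
      by (rule Greatest_le_nat) (rule bnd)
    then show False by simp
  qed
  show ?thesis using P Q assms by (simp add: v_def)
qed

lemma v_mult:
  assumes "m > 0" "q \<ge> 2"
  shows "v q (m * q) = Suc (v q m)"
proof (rule v_char)
  obtain h1 h2 where h1: "q ^ v q m dvd m" and h2: "\<not> q ^ Suc (v q m) dvd m"
    using v_prop[OF assms] by blast
  show "m * q > 0" using assms by simp
  show "q ^ Suc (v q m) dvd m * q" using h1 by (simp add: mult.commute mult_dvd_mono)
  show "\<not> q ^ Suc (Suc (v q m)) dvd m * q"
  proof
    assume "q ^ Suc (Suc (v q m)) dvd m * q"
    then have "q ^ Suc (v q m) * q dvd m * q" by (simp add: mult.commute)
    then have "q ^ Suc (v q m) dvd m" using assms(2) by (simp del: power_Suc)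
    with h2 show False by simp
  qed
qed

lemma v_nondvd:
  assumes "\<not> q dvd n"
  shows "v q n = 0"
proof (cases "n = 0")
  case True then show ?thesis by (simp add: v_def)
next
  case False then show ?thesis using assms by (intro v_char) auto
qed

lemma w_Suc: "w q (Suc n) = w q n + v q (Suc n)"
  by (simp add: w_def)

lemma u_Suc: "u q (Suc n) = u q n + w q (Suc n)"
  by (simp add: u_def)

lemma w_off:
  assumes "q \<ge> 2" "l < q"
  shows "w q (a * q + l) = w q (a * q)"
  using assms(2)
proof (induction l)
  case 0 then show ?case by simp
next
  case (Suc l)
  have "\<not> q dvd Suc (a * q + l)"
  proof
    assume "q dvd Suc (a * q + l)"
    then have "q dvd Suc l" by (metis add_Suc_right dvd_add_right_iff dvd_triv_right)
    then show False using Suc.prems by (simp add: nat_dvd_not_less)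
  qed
  then show ?case using Suc by (simp add: w_Suc v_nondvd)
qed

lemma w_mul:
  assumes "q \<ge> 2"
  shows "w q (a * q) = w q a + a"
proof (induction a)
  case 0 then show ?case by (simp add: w_def v_def)
next
  case (Suc a)
  have e: "Suc a * q = Suc (a * q + (q - 1))" using assms by simp
  have "w q (Suc a * q) = w q (a * q + (q - 1)) + v q (Suc a * q)"
    by (subst e, subst w_Suc, simp only: e[symmetric])
  also have "\<dots> = w q a + a + Suc (v q (Suc a))"
    using w_off[OF assms, of "q - 1" a] assms Suc v_mult[of "Suc a" q] by simp
  finally show ?case by (simp add: w_Suc)
qed

lemma w_gen:
  assumes "q \<ge> 2" "l < q"
  shows "w q (a * q + l) = w q a + a"
  using w_off[OF assms] w_mul[OF assms(1)] by simp

lemma main: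
  assumes "q \<ge> 2" "l < q"
  shows "real (u q (a * q + l)) =
           real q * real (u q a) + (real l + 1 - real q) * real (w q a)
           + real q * (real a * (real a + 1) / 2) + (real l + 1 - real q) * real a"
  using assms(2)
proof (induction a arbitrary: l)
  case 0
  then show ?case
  proof (induction l)
    case 0 then show ?case by (simp add: u_def w_def v_def)
  next
    case (Suc l)
    have "w q (Suc l) = 0" using w_gen[OF assms(1) Suc.prems, of 0] by (simp add: w_def v_def)
    then show ?case using Suc by (simp add: u_Suc w_def v_def u_def algebra_simps)
  qed
next
  case (Suc a)
  show ?case using Suc.prems
  proof (induction l)
    case 0
    have e: "Suc a * q = Suc (a * q + (q - 1))" using assms by simp
    have "u q (Suc a * q) = u q (a * q + (q - 1)) + w q (Suc a * q)"
      by (subst e, subst u_Suc, simp only: e[symmetric])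
    moreover have "w q (Suc a * q) = w q (Suc a) + Suc a"
      using w_mul[OF assms(1), of "Suc a"] by (simp del: mult_Suc)
    moreover have "real (u q (a * q + (q - 1))) = real q * real (u q a)
       + real q * (real a * (real a + 1) / 2)"
      using Suc.IH[of "q - 1"] assms by (simp add: of_nat_diff)
    moreover have "u q (Suc a) = u q a + w q (Suc a)" by (simp add: u_Suc)
    ultimately show ?case by (simp add: algebra_simps add_divide_distrib)
  next
    case (Suc l)
    have "w q (Suc a * q + Suc l) = w q (Suc a) + Suc a"
      using w_gen[OF assms(1) Suc.prems] .
    then have "u q (Suc a * q + Suc l) = u q (Suc a * q + l) + w q (Suc a) + Suc a"
      by (simp add: u_Suc)
    then show ?case using Suc by (simp add: algebra_simps)
  qed
qed

theorem lemma2p2: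
  fixes q l a :: nat
  assumes "q \<ge> 2" and "l \<le> q - 1"
  shows "real (u q (a * q + l)) =
           real q * real (u q a) + (real l + 1 - real q) * real (w q a)
           + real q / 2 * (real a)^2 + (real l + 1 - real q / 2) * real a
       \<and> real (u q (a * q + l)) =
           real q * real (u q a) + (real l + 1 - real q) * real (w q a)
           + real q * (real a * (real a + 1) / 2) + (real l + 1 - real q) * real a"
proof -
  have lq: "l < q" using assms by simp
  note m = main[OF assms(1) lq, of a]
  show ?thesis using m by (simp add: algebra_simps power2_eq_square add_divide_distrib)
qed

end
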